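(* Let $V\subset\mathbb N$ be finite, $l\in\mathbb N$, and let $G_{\mathbf i}\in\mathcal C_{V,2l}$ have a balanced leaf $v_j$. Let $\widetilde G$ be the version of $G_{\mathbf i}$ with $v_j$ removed. Then $B(G_{\mathbf i})\setminus\{v_j\}=B(\widetilde G)$.
   Context: For a finite $V\subset\mathbb N$ and $N\ge1$, a route through $V$ of length $N$ is a sequence $\mathbf i=(i_1,\dots,i_N)\in V^N$ whose set of entries equals $V$; its circuit multigraph $G_{\mathbf i}$ has vertex set $V$ and edges $1,\dots,N$, edge $k<N$ from $i_k$ to $i_{k+1}$, edge $N$ from $i_N$ to $i_1$; $\mathcal C_{V,N}$ is the set of these. The black vertices are $B(G_{\mathbf i})=\{i_t:t\text{ odd}\}$. Balanced leaf (only when $N>2$): a vertex $v$ occurring exactly once in $\mathbf i$, say $i_t=v$, whose cyclic neighbours $i_{t-1},i_{t+1}$ (indices mod $N$) are equal. The version with $v=i_t$ removed is $G_{\mathbf i'}$, where $\mathbf i'$ is obtained from $\mathbf i$ by deleting the entries at positions $t,t+1$ if $t<N$, and at positions $N-1,N$ if $t=N$; it is a route through $V\setminus\{v\}$ of length $N-2$. *)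

theory Defs
  imports Main
begin

text \<open>Sequences (i_1,...,i_N) are lists; list index k corresponds to position t = k+1.
  The circuit multigraph G_i is determined by the sequence i, so we work with i directly.\<close>

definition route :: "nat set \<Rightarrow> nat \<Rightarrow> nat list \<Rightarrow> bool" where
  "route V N i \<longleftrightarrow> N \<ge> 1 \<and> length i = N \<and> set i = V"

text \<open>Black vertices: entries i_t with t odd, i.e. list indices k = t-1 even.\<close>
definition black :: "nat list \<Rightarrow> nat set" where
  "black i = {i ! k | k. k < length i \<and> even k}"

definition balanced_leaf_at :: "nat list \<Rightarrow> nat \<Rightarrow> bool" where
  "balanced_leaf_at i k \<longleftrightarrow> length i > 2 \<and> k < length i \<and> count_list i (i ! k) = 1 \<and>
     i ! ((k + length i - 1) mod length i) = i ! ((k + 1) mod length i)"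

definition balanced_leaf :: "nat list \<Rightarrow> nat \<Rightarrow> bool" where
  "balanced_leaf i v \<longleftrightarrow> (\<exists>k<length i. i ! k = v \<and> balanced_leaf_at i k)"

definition remove_leaf :: "nat list \<Rightarrow> nat \<Rightarrow> nat list" where
  "remove_leaf i k = (if k + 1 < length i then take k i @ drop (k + 2) i
                      else take (length i - 2) i)"

end

theory Submission
  imports Defs
begin

lemma unique_idx:
  assumes "count_list i (i ! k) = 1" "k < length i" "j < length i" "i ! j = i ! k"
  shows "j = k"
proof (rule ccontr)
  assume ne: "j \<noteq> k"
  have dec: "i = take k i @ [i ! k] @ drop (Suc k) i" using assms(2) id_take_nth_drop by simp
  have "count_list i (i!k) = count_list (take k i) (i!k) + 1 + count_list (drop (Suc k) i) (i!k)"
    by (subst dec) simp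
  hence c1: "i!k \<notin> set (take k i)" and c2: "i!k \<notin> set (drop (Suc k) i)"
    using assms(1) count_list_0_iff by fastforce+
  show False
  proof (cases "j < k")
    case True
    then have "take k i ! j = i ! j" by simp
    moreover have "j < length (take k i)" using True assms(2) by simp
    ultimately show False using c1 assms(4) by (metis nth_mem)
  next
    case False
    then have jk: "j > k" using ne by simp
    have "drop (Suc k) i ! (j - Suc k) = i ! j" using jk assms(3) by simp
    moreover have "j - Suc k < length (drop (Suc k) i)" using jk assms(3) by simp
    ultimately show False using c2 assms(4) by (metis nth_mem)
  qed
qed

theorem lemma4p3:
  fixes V :: "nat set" and l :: nat and i :: "nat list" and v k :: nat
  assumes "finite V"
    and "route V (2 * l) i"
    and "balanced_leaf i v"
    and "k < length i" and "i ! k = v"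
  shows "black i - {v} = black (remove_leaf i k)"
proof -
  define N where "N = length i"
  have Nev: "N = 2 * l" using assms(2) unfolding route_def N_def by simp
  obtain k' where k': "k' < N" "i ! k' = v" "balanced_leaf_at i k'"
    using assms(3) unfolding balanced_leaf_def N_def by blast
  have cnt: "count_list i (i ! k') = 1" and N2: "N > 2"
   and nb: "i ! ((k' + N - 1) mod N) = i ! ((k' + 1) mod N)"
    using k'(3) unfolding balanced_leaf_at_def N_def by auto
  have uniq: "\<And>j. j < N \<Longrightarrow> i ! j = v \<Longrightarrow> j = k'"
    using unique_idx[OF cnt] k' unfolding N_def by metis
  hence kk: "k' = k" using assms(4,5) N_def by simp
  have lhs: "black i - {v} = {i ! j | j. j < N \<and> even j \<and> j \<noteq> k}"
    unfolding black_def N_def using uniq N_def kk assms(5) by fastforce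
  show ?thesis
  proof (cases "k + 1 < N")
    case True
    have rl: "remove_leaf i k = take k i @ drop (k + 2) i"
      using True unfolding remove_leaf_def N_def by simp
    let ?r = "take k i @ drop (k + 2) i"
    have len: "length ?r = N - 2" using True N_def by simp
    have nth: "\<And>j. j < N - 2 \<Longrightarrow> ?r ! j = (if j < k then i ! j else i ! (j + 2))"
      using True N_def by (auto simp: nth_append min_def)
    have br: "black ?r = {i ! j | j. j < N \<and> even j \<and> j \<noteq> k \<and> j \<noteq> k + 1}"
    proof -
      have "black ?r = {?r ! j | j. j < N - 2 \<and> even j}" unfolding black_def len by simp
      also have "\<dots> = {i ! j | j. j < N \<and> even j \<and> j \<noteq> k \<and> j \<noteq> k + 1}"
      proof (intro set_eqI iffI)
        fix x assume "x \<in> {?r ! j | j. j < N - 2 \<and> even j}"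
        then obtain j where j: "j < N - 2" "even j" "x = ?r ! j" by blast
        show "x \<in> {i ! j | j. j < N \<and> even j \<and> j \<noteq> k \<and> j \<noteq> k + 1}"
        proof (cases "j < k")
          case True then show ?thesis using j nth by fastforce
        next
          case False
          then have "x = i ! (j+2)" using j nth by simp
          moreover have "j + 2 < N" "even (j+2)" "j+2 \<noteq> k" "j+2 \<noteq> k+1" using j False by auto
          ultimately show ?thesis by blast
        qed
      next
        fix x assume "x \<in> {i ! j | j. j < N \<and> even j \<and> j \<noteq> k \<and> j \<noteq> k + 1}"
        then obtain j where j: "j < N" "even j" "j \<noteq> k" "j \<noteq> k+1" "x = i ! j" by blast
        show "x \<in> {?r ! j | j. j < N - 2 \<and> even j}"
        proof (cases "j < k")
          case True
          then have "x = ?r ! j" "j < N - 2" using j nth True \<open>k+1<N\<close> by auto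
          then show ?thesis using j by blast
        next
          case False
          then have jj: "j \<ge> k + 2" using j by simp
          have e: "j - 2 + 2 = j" using jj by simp
          have "j - 2 < N - 2" "\<not> j - 2 < k" using jj j by auto
          then have "?r ! (j - 2) = i ! (j - 2 + 2)" using nth[of "j-2"] by presburger
          then have "x = ?r ! (j - 2)" "j - 2 < N - 2" "even (j - 2)" using j jj e by auto
          then show ?thesis by blast
        qed
      qed
      finally show ?thesis .
    qed
    show ?thesis unfolding rl br lhs
    proof (intro set_eqI iffI)
      fix x assume "x \<in> {i ! j | j. j < N \<and> even j \<and> j \<noteq> k}"
      then obtain j where j: "j < N" "even j" "j \<noteq> k" "x = i ! j" by blast
      show "x \<in> {i ! j | j. j < N \<and> even j \<and> j \<noteq> k \<and> j \<noteq> k + 1}"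
      proof (cases "j = k + 1")
        case False then show ?thesis using j by blast
      next
        case True
        then have k1': "odd k" using j by auto
        have k0: "(0::nat) < k" using k1' by (cases k) auto
        have k1: "k \<ge> 1" "odd k" using k0 k1' by auto
        have "k + N - 1 = (k - 1) + N" using k1 by simp
        moreover have "k - 1 < N" using j True by linarith
        ultimately have "(k + N - 1) mod N = k - 1" by (metis mod_add_self2 mod_less)
        moreover have "(k + 1) mod N = k + 1" using \<open>k+1<N\<close> by simp
        ultimately have "i ! (k - 1) = x" using nb kk j(4) True by (metis Suc_eq_plus1)
        moreover have "k - 1 < N" "even (k - 1)" "k - 1 \<noteq> k" "k - 1 \<noteq> k + 1" using k1 \<open>k+1<N\<close> by auto
        ultimately show ?thesis by blast
      qed
    qed auto
  next
    case False
    then have kN: "k = N - 1" using assms(4) N_def by simp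
    have rl: "remove_leaf i k = take (N - 2) i"
      using False unfolding remove_leaf_def N_def by simp
    have kodd: "odd k" using kN Nev N2 by (cases l) auto
    have "(k + N - 1) mod N = N - 2" using kN N2 by (simp add: mod_if)
    moreover have "(k + 1) mod N = 0" using kN N2 by simp
    ultimately have w: "i ! (N - 2) = i ! 0" using nb kk by simp
    have br: "black (take (N - 2) i) = {i ! j | j. j < N - 2 \<and> even j}"
      unfolding black_def using N_def by (auto; metis nth_take)
    show ?thesis unfolding rl br lhs
    proof (intro set_eqI iffI)
      fix x assume "x \<in> {i ! j | j. j < N \<and> even j \<and> j \<noteq> k}"
      then obtain j where j: "j < N" "even j" "j \<noteq> k" "x = i ! j" by blast
      show "x \<in> {i ! j | j. j < N - 2 \<and> even j}"
      proof (cases "j = N - 2")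
        case True then have "x = i ! 0" using w j by simp
        then show ?thesis using N2 by force
      next
        case False then show ?thesis using j kN by (intro CollectI exI[of _ j]) auto
      qed
    next
      fix x assume "x \<in> {i ! j | j. j < N - 2 \<and> even j}"
      then show "x \<in> {i ! j | j. j < N \<and> even j \<and> j \<noteq> k}" using kN kodd by fastforce
    qed
  qed
qed

end
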